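(* Let $r:\mathbb{R}_+\to\mathbb{R}_+$ be concave and strictly increasing with $r(z)<1/2$ for all $z\in\mathbb{R}_+$. For each integer $i\ge1$ let $C^i\subseteq\mathbb{R}^n$ be a closed convex set with $\mathbf 0\in C^i$ and \[ \Big\{\mathbf x\in\mathbb{R}^n:\ \|\mathbf x\|_2\le\tfrac{r(i-1)+r(i+1)}{2}\Big\}\subseteq C^i\subseteq\{\mathbf x\in\mathbb{R}^n:\ \|\mathbf x\|_2\le r(i)\}. \] Then $S=\bigcup_{i=1}^\infty\big(C^i+i\,\mathbf e(1)\big)$ is a rational MICP representable set, and the sets $C^i+i\,\mathbf e(1)$, $i\ge1$, are pairwise disjoint.
   Context: $\mathbf e(1)$ denotes the first standard unit vector of $\mathbb{R}^n$. A set $S\subseteq\mathbb{R}^n$ is MICP representable if there is a closed convex $M\subseteq\mathbb{R}^{n+p+d}$ (variables $(\mathbf x,\mathbf y,\mathbf z)$, $\mathbf x\in\mathbb{R}^n,\mathbf y\in\mathbb{R}^p,\mathbf z\in\mathbb{R}^d$) such that $\mathbf x\in S$ iff there exist $\mathbf y\in\mathbb{R}^p$, $\mathbf z\in\mathbb{Z}^d$ with $(\mathbf x,\mathbf y,\mathbf z)\in M$. It is rational MICP representable if such an $M$ exists with $\operatorname{proj}_{\mathbf z}(M)$ rationally unbounded, where $I\subseteq\mathbb{R}^d$ is rationally unbounded if for every image $I'\subseteq\mathbb{R}^{d'}$ of $I$ under a rational affine map, either $I'$ is bounded or its recession cone $I'_\infty=\{\mathbf r:\ \mathbf x+\lambda\mathbf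 r\in I'\ \forall\mathbf x\in I',\lambda\ge0\}$ contains a nonzero integer vector. *)

theory Defs
  imports "HOL-Analysis.Analysis"
begin

text \<open>Points of R^k are represented as functions nat => real vanishing from index k on
  (coordinate j of the paper is index j-1). The topology is the library product topology
  on nat => real, which restricted to the closed subspace R^k is the Euclidean one.\<close>

definition Rn :: "nat \<Rightarrow> (nat \<Rightarrow> real) set" where
  "Rn k = {v. \<forall>i\<ge>k. v i = 0}"

definition vcomb :: "real \<Rightarrow> (nat \<Rightarrow> real) \<Rightarrow> (nat \<Rightarrow> real) \<Rightarrow> (nat \<Rightarrow> real)" where
  "vcomb u x y = (\<lambda>i. (1 - u) * x i + u * y i)"

definition vconvex :: "(nat \<Rightarrow> real) set \<Rightarrow> bool" where
  "vconvex A \<longleftrightarrow> (\<forall>x\<in>A. \<forall>y\<in>A. \<forall>u::real. 0 \<le> u \<and> u \<le> 1 \<longrightarrow> vcomb u x y \<in> A)"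

definition vconvex3 :: "((nat \<Rightarrow> real) \<times> (nat \<Rightarrow> real) \<times> (nat \<Rightarrow> real)) set \<Rightarrow> bool" where
  "vconvex3 M \<longleftrightarrow> (\<forall>x y z x' y' z' u. (x,y,z) \<in> M \<and> (x',y',z') \<in> M \<and> 0 \<le> u \<and> u \<le> (1::real)
      \<longrightarrow> (vcomb u x x', vcomb u y y', vcomb u z z') \<in> M)"

definition Zvec :: "(nat \<Rightarrow> real) \<Rightarrow> bool" where
  "Zvec v \<longleftrightarrow> (\<forall>i. v i \<in> \<int>)"

definition norm2 :: "nat \<Rightarrow> (nat \<Rightarrow> real) \<Rightarrow> real" where
  "norm2 k x = sqrt (\<Sum>i<k. (x i)\<^sup>2)"

definition e1 :: "nat \<Rightarrow> real" where
  "e1 = (\<lambda>i. if i = 0 then 1 else 0)"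

definition vshift :: "(nat \<Rightarrow> real) set \<Rightarrow> (nat \<Rightarrow> real) \<Rightarrow> (nat \<Rightarrow> real) set" where
  "vshift C t = (\<lambda>x. (\<lambda>i. x i + t i)) ` C"

definition vscale :: "real \<Rightarrow> (nat \<Rightarrow> real) \<Rightarrow> (nat \<Rightarrow> real)" where
  "vscale c v = (\<lambda>i. c * v i)"

definition raff_image ::
  "nat \<Rightarrow> nat \<Rightarrow> (nat \<Rightarrow> nat \<Rightarrow> real) \<Rightarrow> (nat \<Rightarrow> real) \<Rightarrow> (nat \<Rightarrow> real) set \<Rightarrow> (nat \<Rightarrow> real) set" where
  "raff_image d d' A b I = (\<lambda>x. (\<lambda>j. if j < d' then (\<Sum>i<d. A j i * x i) + b j else 0)) ` I"

definition rational_affine :: "nat \<Rightarrow> nat \<Rightarrow> (nat \<Rightarrow> nat \<Rightarrow> real) \<Rightarrow> (nat \<Rightarrow> real) \<Rightarrow> bool" where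
  "rational_affine d d' A b \<longleftrightarrow> (\<forall>j<d'. b j \<in> \<rat> \<and> (\<forall>i<d. A j i \<in> \<rat>))"

definition vbounded :: "nat \<Rightarrow> (nat \<Rightarrow> real) set \<Rightarrow> bool" where
  "vbounded k I \<longleftrightarrow> (\<exists>B. \<forall>v\<in>I. norm2 k v \<le> B)"

definition rec_cone :: "nat \<Rightarrow> (nat \<Rightarrow> real) set \<Rightarrow> (nat \<Rightarrow> real) set" where
  "rec_cone k I = {r \<in> Rn k. \<forall>x\<in>I. \<forall>t::real. t \<ge> 0 \<longrightarrow> (\<lambda>i. x i + t * r i) \<in> I}"

definition rationally_unbounded :: "nat \<Rightarrow> (nat \<Rightarrow> real) set \<Rightarrow> bool" where
  "rationally_unbounded d I \<longleftrightarrow>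
     (\<forall>d' A b. rational_affine d d' A b \<longrightarrow>
        (let I' = raff_image d d' A b I in
           vbounded d' I' \<or> (\<exists>r\<in>rec_cone d' I'. r \<noteq> (\<lambda>_. 0) \<and> Zvec r)))"

definition proj_z :: "((nat \<Rightarrow> real) \<times> (nat \<Rightarrow> real) \<times> (nat \<Rightarrow> real)) set \<Rightarrow> (nat \<Rightarrow> real) set" where
  "proj_z M = {z. \<exists>x y. (x, y, z) \<in> M}"

definition MICP_rep_by ::
  "nat \<Rightarrow> (nat \<Rightarrow> real) set \<Rightarrow> nat \<Rightarrow> nat \<Rightarrow> ((nat \<Rightarrow> real) \<times> (nat \<Rightarrow> real) \<times> (nat \<Rightarrow> real)) set \<Rightarrow> bool" where
  "MICP_rep_by n S p d M \<longleftrightarrow>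
     M \<subseteq> Rn n \<times> Rn p \<times> Rn d \<and> closed M \<and> vconvex3 M \<and>
     (\<forall>x\<in>Rn n. x \<in> S \<longleftrightarrow> (\<exists>y\<in>Rn p. \<exists>z\<in>Rn d. Zvec z \<and> (x, y, z) \<in> M))"

definition MICP_representable :: "nat \<Rightarrow> (nat \<Rightarrow> real) set \<Rightarrow> bool" where
  "MICP_representable n S \<longleftrightarrow> S \<subseteq> Rn n \<and> (\<exists>p d M. MICP_rep_by n S p d M)"

definition rational_MICP_representable :: "nat \<Rightarrow> (nat \<Rightarrow> real) set \<Rightarrow> bool" where
  "rational_MICP_representable n S \<longleftrightarrow> S \<subseteq> Rn n \<and>
     (\<exists>p d M. MICP_rep_by n S p d M \<and> rationally_unbounded d (proj_z M))"

end

theory Submission imports Defs begin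

lemma chord:
  fixes r :: "real \<Rightarrow> real" and k i :: nat
  assumes conc: "concave_on {0..} r" and k: "k \<ge> 1" and ik: "i \<noteq> k"
  shows "r (real i) \<le> (r (real k - 1) + r (real k + 1))/2
            + (r (real k + 1) - r (real k - 1))/2 * (real i - real k)"
proof -
  consider "i = k + 1" | "i + 1 = k" | "i \<ge> k + 2" | "i + 2 \<le> k" using ik by linarith
  then show ?thesis
  proof cases
    case 1 then show ?thesis by (simp add: field_simps)
  next
    case 2 then have ri: "real i = real k - 1" by linarith
    show ?thesis unfolding ri by (simp add: field_simps)
  next
    case 3
    define D where "D = real i - real k + 1"
    have D2: "D \<ge> 2" using 3 unfolding D_def by linarith
    define t where "t = 2 / D"
    have t0: "0 \<le> t" "t \<le> 1" using D2 unfolding t_def by auto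
    have x: "real k - 1 \<in> {0..}" using k by simp
    have y: "real i \<in> {0..}" by simp
    have cc: "(1 - t) * r (real k - 1) + t * r (real i) \<le> r ((1 - t) *\<^sub>R (real k - 1) + t *\<^sub>R real i)"
      using concave_onD[OF conc t0 x y] .
    have num: "(D - 2)*(real k - 1) + 2 * real i = D * (real k + 1)" unfolding D_def by (simp add: algebra_simps)
    have "(1 - t) *\<^sub>R (real k - 1) + t *\<^sub>R real i = ((D - 2)*(real k - 1) + 2 * real i) / D"
      using D2 unfolding t_def by (simp add: field_simps)
    also have "\<dots> = real k + 1" using num D2 by simp
    finally have eq: "(1 - t) *\<^sub>R (real k - 1) + t *\<^sub>R real i = real k + 1" .
    have h: "(1 - t) * r (real k - 1) + t * r (real i) \<le> r (real k + 1)" using cc eq by simp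
    have h2: "D * ((1 - t) * r (real k - 1) + t * r (real i)) \<le> D * r (real k + 1)"
      using h D2 by (intro mult_left_mono) auto
    have "D * ((1 - t) * r (real k - 1) + t * r (real i)) = (D - 2) * r (real k - 1) + 2 * r (real i)"
      using D2 unfolding t_def by (simp add: field_simps)
    with h2 have "(D - 2) * r (real k - 1) + 2 * r (real i) \<le> D * r (real k + 1)" by simp
    then show ?thesis unfolding D_def by (simp add: field_simps)
  next
    case 4
    define E where "E = real k + 1 - real i"
    have E2: "E \<ge> 3" using 4 unfolding E_def by linarith
    define t where "t = (E - 2) / E"
    have t0: "0 \<le> t" "t \<le> 1" using E2 unfolding t_def by auto
    have x: "real i \<in> {0..}" by simp
    have y: "real k + 1 \<in> {0..}" by simp
    have cc: "(1 - t) * r (real i) + t * r (real k + 1) \<le> r ((1 - t) *\<^sub>R real i + t *\<^sub>R (real k + 1))"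
      using concave_onD[OF conc t0 x y] .
    have num: "2 * real i + (E - 2)*(real k + 1) = E * (real k - 1)" unfolding E_def by (simp add: algebra_simps)
    have "(1 - t) *\<^sub>R real i + t *\<^sub>R (real k + 1) = (2 * real i + (E - 2)*(real k + 1)) / E"
      using E2 unfolding t_def by (simp add: field_simps)
    also have "\<dots> = real k - 1" using num E2 by simp
    finally have eq: "(1 - t) *\<^sub>R real i + t *\<^sub>R (real k + 1) = real k - 1" .
    have h: "(1 - t) * r (real i) + t * r (real k + 1) \<le> r (real k - 1)" using cc eq by simp
    have h2: "E * ((1 - t) * r (real i) + t * r (real k + 1)) \<le> E * r (real k - 1)"
      using h E2 by (intro mult_left_mono) auto
    have "E * ((1 - t) * r (real i) + t * r (real k + 1)) = 2 * r (real i) + (E - 2) * r (real k + 1)"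
      using E2 unfolding t_def by (simp add: field_simps)
    with h2 have "2 * r (real i) + (E - 2) * r (real k + 1) \<le> E * r (real k - 1)" by simp
    then show ?thesis unfolding E_def by (simp add: field_simps)
  qed
qed

lemma common_denom:
  fixes q :: "nat \<Rightarrow> real"
  shows "(\<forall>j<N. q j \<in> \<rat>) \<Longrightarrow> \<exists>D::nat. D > 0 \<and> (\<forall>j<N. real D * q j \<in> \<int>)"
proof (induction N)
  case 0 then show ?case by (intro exI[of _ 1]) auto
next
  case (Suc N)
  then obtain D where D: "D > 0" "\<forall>j<N. real D * q j \<in> \<int>" by auto
  have "q N \<in> \<rat>" using Suc.prems by auto
  then obtain a b where ab: "0 < b" "q N = of_int a / of_int b" using Rats_cases' by metis
  define D' where "D' = D * nat b"
  have "real D' * q j \<in> \<int>" if "j < Suc N" for j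
  proof (cases "j = N")
    case True
    have "real D' * q N = real D * of_int a" using ab unfolding D'_def by (simp add: field_simps)
    then show ?thesis using True by simp
  next
    case False
    then have "j < N" using that by simp
    then have i1: "real D * q j \<in> \<int>" using D by auto
    have "real D' = of_int b * real D" using ab unfolding D'_def by simp
    then have "real D' * q j = of_int b * (real D * q j)" by simp
    then show ?thesis using i1 by (metis Ints_mult Ints_of_int)
  qed
  moreover have "D' > 0" using D ab unfolding D'_def by simp
  ultimately show ?case by blast
qed

lemma norm2_scale: "norm2 k (\<lambda>i. a * v i) = \<bar>a\<bar> * norm2 k v"
proof -
  have "(\<Sum>i<k. (a * v i)\<^sup>2) = a\<^sup>2 * (\<Sum>i<k. (v i)\<^sup>2)"
    by (simp add: power_mult_distrib sum_distrib_left)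
  then show ?thesis unfolding norm2_def by (simp add: real_sqrt_mult)
qed

lemma abs0_le_norm2: assumes "n \<ge> 1" shows "\<bar>v 0\<bar> \<le> norm2 n v"
proof -
  have "(v 0)\<^sup>2 \<le> (\<Sum>i<n. (v i)\<^sup>2)"
    using assms by (intro member_le_sum[where f = "\<lambda>i. (v i)\<^sup>2"]) auto
  then have "sqrt ((v 0)\<^sup>2) \<le> norm2 n v" unfolding norm2_def using real_sqrt_le_mono by blast
  then show ?thesis by simp
qed

lemma closed_Rn: "closed (Rn k)"
proof -
  have "Rn k = (\<Inter>i\<in>{k..}. {v. v i = 0})" unfolding Rn_def by auto
  moreover have "closed {v::nat\<Rightarrow>real. v i = 0}" for i
    by (intro closed_Collect_eq continuous_on_product_coordinates continuous_on_const)
  ultimately show ?thesis by auto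
qed

lemma Rn_vcomb: "x \<in> Rn k \<Longrightarrow> y \<in> Rn k \<Longrightarrow> vcomb u x y \<in> Rn k"
  by (simp add: Rn_def vcomb_def)

lemma cont_coord_fst: "continuous_on S (\<lambda>p::(nat\<Rightarrow>real)\<times>'b::topological_space. fst p i)"
  by (rule continuous_on_compose2[OF continuous_on_product_coordinates continuous_on_fst[OF continuous_on_id]]) auto

lemma cont_coord_z: "continuous_on S (\<lambda>p::'a::topological_space\<times>'b::topological_space\<times>(nat\<Rightarrow>real). snd (snd p) i)"
  by (rule continuous_on_compose2[OF continuous_on_product_coordinates continuous_on_snd[OF continuous_on_snd[OF continuous_on_id]]]) auto

theorem proposition2:
  fixes r :: "real \<Rightarrow> real" and n :: nat and C :: "nat \<Rightarrow> (nat \<Rightarrow> real) set"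
  assumes "n \<ge> 1"
    and "concave_on {0..} r" and "strict_mono_on {0..} r"
    and "\<forall>z\<ge>0. 0 \<le> r z \<and> r z < 1/2"
    and "\<forall>i\<ge>1. C i \<subseteq> Rn n \<and> closed (C i) \<and> vconvex (C i) \<and> (\<lambda>_. 0) \<in> C i"
    and "\<forall>i\<ge>1. {x \<in> Rn n. norm2 n x \<le> (r (real i - 1) + r (real i + 1)) / 2} \<subseteq> C i"
    and "\<forall>i\<ge>1. C i \<subseteq> {x \<in> Rn n. norm2 n x \<le> r (real i)}"
  shows "rational_MICP_representable n (\<Union>i\<in>{1..}. vshift (C i) (vscale (real i) e1))
         \<and> (\<forall>i\<ge>1. \<forall>j\<ge>1. i \<noteq> j \<longrightarrow>
              vshift (C i) (vscale (real i) e1) \<inter> vshift (C j) (vscale (real j) e1) = {})"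
proof -
  note n1 = assms(1) and conc = assms(2) and smono = assms(3) and rb = assms(4)
    and CC = assms(5) and Cin = assms(6) and Cout = assms(7)
  define S where "S = (\<Union>i\<in>{1..}. vshift (C i) (vscale (real i) e1))"
  define s where "s k = (r (real k - 1) + r (real k + 1))/2" for k :: nat
  define m where "m k = (r (real k + 1) - r (real k - 1))/2" for k :: nat
  define L where "L k t = s k + m k * (t - real k)" for k :: nat and t :: real
  define g where "g k p = (\<lambda>i. s k / L k (snd (snd p) 0) * (fst p i - snd (snd p) 0 * e1 i))"
    for k :: nat and p :: "(nat\<Rightarrow>real) \<times> (nat\<Rightarrow>real) \<times> (nat\<Rightarrow>real)"
  define D where "D = {(x::nat\<Rightarrow>real,y::nat\<Rightarrow>real,z::nat\<Rightarrow>real). x \<in> Rn n \<and> y \<in> Rn 0 \<and> z \<in> Rn 1 \<and> 1 \<le> z 0}"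
  define M where "M = {p \<in> D. \<forall>k\<ge>1. g k p \<in> C k}"
  have r0: "0 \<le> r t" if "t \<ge> 0" for t using rb that by auto
  have rlt: "r a < r b" if "0 \<le> a" "a < b" for a b
    using strict_mono_onD[OF smono] that by auto
  have mpos: "m k > 0" if "k \<ge> 1" for k
    using rlt[of "real k - 1" "real k + 1"] that unfolding m_def by auto
  have spos: "s k > 0" if "k \<ge> 1" for k
    using rlt[of "real k - 1" "real k + 1"] r0[of "real k - 1"] that unfolding s_def by auto
  have Lk: "L k (real k) = s k" for k unfolding L_def by simp
  have chordL: "r (real i) \<le> L k (real i)" if "k \<ge> 1" "i \<noteq> k" for k i
    using chord[OF conc that] unfolding L_def s_def m_def by simp
  have Lpos: "L k t > 0" if k: "k \<ge> 1" and t: "t \<ge> 1" for k t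
  proof -
    have "L k 1 > 0"
    proof (cases "k = 1")
      case True then show ?thesis using spos[of 1] unfolding L_def by simp
    next
      case False
      then have "r (real 1) \<le> L k (real 1)" using chordL[of k 1] k by simp
      moreover have "r 0 < r 1" using rlt[of 0 1] by simp
      ultimately show ?thesis using r0[of 0] by simp
    qed
    moreover have "L k t \<ge> L k 1" using mpos[OF k] t unfolding L_def
      by (simp add: mult_left_mono)
    ultimately show ?thesis by simp
  qed
  have e1n: "e1 \<in> Rn n" using n1 unfolding Rn_def e1_def by auto
  have closedD: "closed D"
  proof -
    have "D = Rn n \<times> Rn 0 \<times> (Rn 1 \<inter> {z. 1 \<le> z 0})" unfolding D_def by auto
    moreover have "closed {z::nat\<Rightarrow>real. 1 \<le> z 0}"
      by (intro closed_Collect_le continuous_on_product_coordinates continuous_on_const)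
    ultimately show ?thesis by (simp add: closed_Times closed_Rn closed_Int)
  qed
  have contg: "continuous_on D (g k)" if k: "k \<ge> 1" for k
  proof -
    have nz: "\<forall>p\<in>D. L k (snd (snd p) 0) \<noteq> 0" using Lpos[OF k] unfolding D_def by force
    show ?thesis unfolding g_def
    proof (intro continuous_on_coordinatewise_then_product)
      fix i
      show "continuous_on D (\<lambda>p. s k / L k (snd (snd p) 0) * (fst p i - snd (snd p) 0 * e1 i))"
        using nz unfolding L_def
        by (intro continuous_intros cont_coord_fst cont_coord_z) auto
    qed
  qed
  have MD: "M = D \<inter> (\<Inter>k\<in>{1..}. D \<inter> g k -` C k)" unfolding M_def by auto
  have closedM: "closed M" unfolding MD
    using closedD contg CC by (intro closed_Int closed_INT ballI continuous_closed_preimage) auto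

  have convM: "vconvex3 M" unfolding vconvex3_def
  proof (intro allI impI, elim conjE)
    fix x y z x' y' z' and u :: real
    assume p1: "(x,y,z) \<in> M" and p2: "(x',y',z') \<in> M" and u0: "0 \<le> u" and u1: "u \<le> 1"
    have D1: "x \<in> Rn n" "y \<in> Rn 0" "z \<in> Rn 1" "1 \<le> z 0" using p1 unfolding M_def D_def by auto
    have D2: "x' \<in> Rn n" "y' \<in> Rn 0" "z' \<in> Rn 1" "1 \<le> z' 0" using p2 unfolding M_def D_def by auto
    have a1: "(1-u) * 1 \<le> (1-u) * z 0" using D1 u1 by (intro mult_left_mono) auto
    have a2: "u * 1 \<le> u * z' 0" using D2 u0 by (intro mult_left_mono) auto
    have z1: "1 \<le> vcomb u z z' 0" using a1 a2 unfolding vcomb_def by simp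
    have inD: "(vcomb u x x', vcomb u y y', vcomb u z z') \<in> D"
      using D1 D2 z1 Rn_vcomb unfolding D_def by auto
    have "g k (vcomb u x x', vcomb u y y', vcomb u z z') \<in> C k" if k: "k \<ge> 1" for k
    proof -
      define L1 where "L1 = L k (z 0)"
      define L2 where "L2 = L k (z' 0)"
      define Lt where "Lt = L k (vcomb u z z' 0)"
      have L1p: "L1 > 0" using Lpos[OF k D1(4)] unfolding L1_def .
      have L2p: "L2 > 0" using Lpos[OF k D2(4)] unfolding L2_def .
      have Ltp: "Lt > 0" using Lpos[OF k z1] unfolding Lt_def .
      have Lteq: "Lt = (1-u) * L1 + u * L2" unfolding Lt_def L1_def L2_def L_def vcomb_def
        by (simp add: algebra_simps)
      define w1 where "w1 = g k (x,y,z)"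
      define w2 where "w2 = g k (x',y',z')"
      have w1C: "w1 \<in> C k" using p1 k unfolding M_def w1_def by auto
      have w2C: "w2 \<in> C k" using p2 k unfolding M_def w2_def by auto
      define \<mu> where "\<mu> = u * L2 / Lt"
      have \<mu>0: "0 \<le> \<mu>" using u0 L2p Ltp unfolding \<mu>_def by simp
      have "u * L2 \<le> Lt" using Lteq u1 L1p by (simp add: mult_nonneg_nonneg)
      then have \<mu>1: "\<mu> \<le> 1" using Ltp unfolding \<mu>_def by simp
      have "g k (vcomb u x x', vcomb u y y', vcomb u z z') = vcomb \<mu> w1 w2"
      proof
        fix i
        have m1: "1 - \<mu> = (1-u) * L1 / Lt" using Ltp Lteq unfolding \<mu>_def by (simp add: field_simps)
        define A where "A = x i - z 0 * e1 i"
        define B where "B = x' i - z' 0 * e1 i"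
        have lhs: "g k (vcomb u x x', vcomb u y y', vcomb u z z') i = s k / Lt * ((1-u) * A + u * B)"
          unfolding g_def Lt_def A_def B_def by (simp add: vcomb_def algebra_simps)
        have rw1: "w1 i = s k / L1 * A" unfolding w1_def g_def L1_def A_def by simp
        have rw2: "w2 i = s k / L2 * B" unfolding w2_def g_def L2_def B_def by simp
        have "vcomb \<mu> w1 w2 i = (1 - \<mu>) * w1 i + \<mu> * w2 i" unfolding vcomb_def by simp
        also have "\<dots> = s k / Lt * ((1-u) * A + u * B)"
          unfolding m1 rw1 rw2 using L1p L2p Ltp unfolding \<mu>_def by (simp add: field_simps)
        finally show "g k (vcomb u x x', vcomb u y y', vcomb u z z') i = vcomb \<mu> w1 w2 i"
          using lhs by simp
      qed
      then show ?thesis using CC k w1C w2C \<mu>0 \<mu>1 unfolding vconvex_def by auto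
    qed
    then show "(vcomb u x x', vcomb u y y', vcomb u z z') \<in> M" using inD unfolding M_def by auto
  qed

  have vs: "x \<in> vshift (C i) (vscale (real i) e1) \<longleftrightarrow> (\<exists>c\<in>C i. x = (\<lambda>j. c j + real i * e1 j))" for x i
    unfolding vshift_def vscale_def by auto
  have SRn: "S \<subseteq> Rn n"
  proof
    fix x assume "x \<in> S"
    then obtain i c where i: "i \<ge> 1" "c \<in> C i" "x = (\<lambda>j. c j + real i * e1 j)"
      by (auto simp: S_def vs)
    then have "c \<in> Rn n" using CC by auto
    then show "x \<in> Rn n" using i e1n unfolding Rn_def by auto
  qed
  have fib: "x \<in> S \<longleftrightarrow> (\<exists>y\<in>Rn 0. \<exists>z\<in>Rn 1. Zvec z \<and> (x, y, z) \<in> M)" if xn: "x \<in> Rn n" for x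
  proof
    assume "x \<in> S"
    then obtain i c where i: "i \<ge> 1" "c \<in> C i" and xc: "x = (\<lambda>j. c j + real i * e1 j)"
      by (auto simp: S_def vs)
    define z where "z = (\<lambda>j::nat. if j = 0 then real i else 0)"
    have z0: "z 0 = real i" unfolding z_def by simp
    have zR: "z \<in> Rn 1" unfolding z_def Rn_def by auto
    have zZ: "Zvec z" unfolding z_def Zvec_def by auto
    have y0: "(\<lambda>_. 0::real) \<in> Rn 0" unfolding Rn_def by auto
    have inD: "(x, (\<lambda>_. 0), z) \<in> D" using xn zR y0 i z0 unfolding D_def by auto
    have "g k (x, (\<lambda>_. 0), z) \<in> C k" if k: "k \<ge> 1" for k
    proof -
      have gk: "g k (x, (\<lambda>_. 0), z) = (\<lambda>j. s k / L k (real i) * c j)"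
        unfolding g_def xc by (simp add: z0)
      show ?thesis
      proof (cases "k = i")
        case True
        then show ?thesis using gk Lk spos[OF k] i by simp
      next
        case False
        have cR: "c \<in> Rn n" "norm2 n c \<le> r (real i)" using Cout i by auto
        have Lp: "L k (real i) > 0" using Lpos[OF k] i by simp
        have ri: "r (real i) \<le> L k (real i)" using chordL[OF k] False by auto
        have "norm2 n (\<lambda>j. s k / L k (real i) * c j) = s k / L k (real i) * norm2 n c"
          using spos[OF k] Lp norm2_scale[of n "s k / L k (real i)" c] by simp
        also have "\<dots> \<le> s k / L k (real i) * L k (real i)"
          using cR ri spos[OF k] Lp by (intro mult_left_mono) auto
        also have "\<dots> = s k" using Lp by simp
        finally have nb: "norm2 n (\<lambda>j. s k / L k (real i) * c j) \<le> s k" .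
        have "(\<lambda>j. s k / L k (real i) * c j) \<in> Rn n" using cR unfolding Rn_def by auto
        then show ?thesis using Cin k nb gk unfolding s_def by auto
      qed
    qed
    then have "(x, (\<lambda>_. 0), z) \<in> M" using inD unfolding M_def by auto
    then show "\<exists>y\<in>Rn 0. \<exists>z\<in>Rn 1. Zvec z \<and> (x, y, z) \<in> M" using y0 zR zZ by blast
  next
    assume "\<exists>y\<in>Rn 0. \<exists>z\<in>Rn 1. Zvec z \<and> (x, y, z) \<in> M"
    then obtain y z where zZ: "Zvec z" and xM: "(x, y, z) \<in> M" by auto
    have z1: "1 \<le> z 0" using xM unfolding M_def D_def by auto
    have "z 0 \<in> \<int>" using zZ unfolding Zvec_def by auto
    then obtain a where a: "z 0 = of_int a" by (auto elim: Ints_cases)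
    define k where "k = nat a"
    have zk: "z 0 = real k" using a z1 unfolding k_def by simp
    have k: "k \<ge> 1" using zk z1 by simp
    have "g k (x, y, z) \<in> C k" using xM k unfolding M_def by auto
    then have cC: "(\<lambda>j. x j - real k * e1 j) \<in> C k"
      unfolding g_def using zk Lk spos[OF k] by simp
    have "x = (\<lambda>j. (\<lambda>j. x j - real k * e1 j) j + real k * e1 j)" by simp
    then have "x \<in> vshift (C k) (vscale (real k) e1)" unfolding vs using cC by (intro bexI[of _ "(\<lambda>j. x j - real k * e1 j)"]) auto
    then show "x \<in> S" unfolding S_def using k by auto
  qed

  have projM: "proj_z M = {z \<in> Rn 1. 1 \<le> z 0}"
  proof (rule set_eqI, rule iffI)
    fix z assume "z \<in> proj_z M" then show "z \<in> {z \<in> Rn 1. 1 \<le> z 0}"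
      unfolding proj_z_def M_def D_def by auto
  next
    fix z assume z: "z \<in> {z \<in> Rn 1. 1 \<le> z 0}"
    define x where "x = (\<lambda>i. z 0 * e1 i)"
    have "x \<in> Rn n" using e1n unfolding x_def Rn_def by auto
    moreover have "(\<lambda>_. 0::real) \<in> Rn 0" unfolding Rn_def by auto
    moreover have "g k (x, (\<lambda>_. 0), z) = (\<lambda>_. 0)" for k unfolding g_def x_def by simp
    ultimately have "(x, (\<lambda>_. 0), z) \<in> M" using z CC unfolding M_def D_def by auto
    then show "z \<in> proj_z M" unfolding proj_z_def by auto
  qed
  have RU: "rationally_unbounded 1 (proj_z M)"
    unfolding rationally_unbounded_def Let_def
  proof (intro allI impI)
    fix d' A b assume ra: "rational_affine 1 d' A b"
    define F where "F z = (\<lambda>j. if j < d' then A j 0 * z 0 + b j else 0)" for z :: "nat \<Rightarrow> real"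
    have img: "raff_image 1 d' A b (proj_z M) = F ` {z \<in> Rn 1. 1 \<le> z 0}"
    proof -
      have s1: "(\<Sum>i<(1::nat). f i) = f 0" for f :: "nat \<Rightarrow> real" by simp
      show ?thesis unfolding raff_image_def projM F_def s1 by simp
    qed
    show "vbounded d' (raff_image 1 d' A b (proj_z M)) \<or>
          (\<exists>r\<in>rec_cone d' (raff_image 1 d' A b (proj_z M)). r \<noteq> (\<lambda>_. 0) \<and> Zvec r)"
    proof (cases "\<forall>j<d'. A j 0 = 0")
      case True
      have "F z = (\<lambda>j. if j < d' then b j else 0)" for z unfolding F_def using True by auto
      then have "vbounded d' (raff_image 1 d' A b (proj_z M))"
        unfolding img vbounded_def by auto
      then show ?thesis ..
    next
      case False
      then obtain j0 where j0: "j0 < d'" "A j0 0 \<noteq> 0" by auto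
      have "\<forall>j<d'. A j 0 \<in> \<rat>" using ra unfolding rational_affine_def by auto
      then obtain D' :: nat where D': "D' > 0" "\<forall>j<d'. real D' * A j 0 \<in> \<int>"
        using common_denom[of d' "\<lambda>j. A j 0"] by auto
      define rr where "rr = (\<lambda>j. if j < d' then real D' * A j 0 else 0)"
      have "rr \<in> rec_cone d' (raff_image 1 d' A b (proj_z M))"
        unfolding rec_cone_def img
      proof (intro CollectI conjI ballI allI impI)
        show "rr \<in> Rn d'" unfolding rr_def Rn_def by auto
        fix v and t :: real assume v: "v \<in> F ` {z \<in> Rn 1. 1 \<le> z 0}" and t: "0 \<le> t"
        then obtain z where z: "z \<in> Rn 1" "1 \<le> z 0" "v = F z" by auto
        define z' where "z' = (\<lambda>i::nat. if i = 0 then z 0 + t * real D' else 0)"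
        have "0 \<le> t * real D'" using t by simp
        then have h1: "1 \<le> z 0 + t * real D'" using z(2) by linarith
        have "z' \<in> {z \<in> Rn 1. 1 \<le> z 0}" using h1 unfolding z'_def Rn_def by auto
        moreover have "F z' = (\<lambda>i. v i + t * rr i)"
          unfolding z(3) F_def z'_def rr_def by (auto simp: algebra_simps)
        ultimately show "(\<lambda>i. v i + t * rr i) \<in> F ` {z \<in> Rn 1. 1 \<le> z 0}" by (metis image_eqI)
      qed
      moreover have "rr \<noteq> (\<lambda>_. 0)"
      proof
        assume "rr = (\<lambda>_. 0)"
        then have "rr j0 = 0" by simp
        then show False using j0 D' unfolding rr_def by simp
      qed
      moreover have "Zvec rr" unfolding Zvec_def rr_def using D' by auto
      ultimately show ?thesis by blast
    qed
  qed
  have disj: "vshift (C i) (vscale (real i) e1) \<inter> vshift (C j) (vscale (real j) e1) = {}"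
    if ij: "i \<ge> 1" "j \<ge> 1" "i \<noteq> j" for i j
  proof (rule ccontr)
    assume "vshift (C i) (vscale (real i) e1) \<inter> vshift (C j) (vscale (real j) e1) \<noteq> {}"
    then obtain x where x1: "x \<in> vshift (C i) (vscale (real i) e1)" and x2: "x \<in> vshift (C j) (vscale (real j) e1)" by blast
    from x1 obtain c where c: "c \<in> C i" "x = (\<lambda>l. c l + real i * e1 l)" unfolding vs by blast
    from x2 obtain c' where c': "c' \<in> C j" "x = (\<lambda>l. c' l + real j * e1 l)" unfolding vs by blast
    have "x 0 = c 0 + real i" using c(2) by (simp add: e1_def)
    moreover have "x 0 = c' 0 + real j" using c'(2) by (simp add: e1_def)
    ultimately have "c 0 + real i = c' 0 + real j" by simp
    moreover have "\<bar>c 0\<bar> < 1/2"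
    proof -
      have "norm2 n c \<le> r (real i)" using Cout c(1) ij(1) by auto
      moreover have "r (real i) < 1/2" using rb by auto
      ultimately show ?thesis using abs0_le_norm2[OF n1, of c] by linarith
    qed
    moreover have "\<bar>c' 0\<bar> < 1/2"
    proof -
      have "norm2 n c' \<le> r (real j)" using Cout c'(1) ij(2) by auto
      moreover have "r (real j) < 1/2" using rb by auto
      ultimately show ?thesis using abs0_le_norm2[OF n1, of c'] by linarith
    qed
    ultimately have "\<bar>real i - real j\<bar> < 1" by linarith
    then show False using ij(3) by linarith
  qed
  have "MICP_rep_by n S 0 1 M"
    unfolding MICP_rep_by_def
  proof (intro conjI ballI)
    show "M \<subseteq> Rn n \<times> Rn 0 \<times> Rn 1" unfolding M_def D_def by auto
  qed (use closedM convM fib in auto)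
  then have "rational_MICP_representable n S"
    unfolding rational_MICP_representable_def using SRn RU by blast
  then show ?thesis using disj unfolding S_def by blast
qed

end
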